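(* Let $\mathcal{F}$ be a finite set of graphs. For every integer $T>0$ and real $\lambda>0$: (i) with $r=\sqrt{T+1}\,n$ and $n\ge r^2/\lambda^2$, $\mathsf{VC}\text{-}\mathsf{dim}\big(\mathbb{H}_{r,\lambda}(\mathcal{E}_{\mathsf{WL},\mathcal{F}}(n,d_T))\big)\in\Theta(r^2/\lambda^2)$; (ii) with $r=\sqrt{T/(T+1)}$ and $n\ge r^2/\lambda^2$, $\mathsf{VC}\text{-}\mathsf{dim}\big(\mathbb{H}_{1,\lambda}(\overline{\mathcal{E}}_{\mathsf{WL},\mathcal{F}}(n,d_T))\big)\in\Theta(1/\lambda^2)$.
   Context: $\mathcal{G}_n$ is the set of (unlabeled, simple, undirected) graphs on $n$ vertices. For a finite set of graphs $\mathcal{F}$, the $1$-WL$_{\mathcal{F}}$ colouring of $G$: $C^{1,\mathcal{F}}_0(v)=(\ell_F(v))_{F\in\mathcal{F}}$, where $\ell_F(v)=1$ if $v$ lies in some $X\subseteq V(G)$ with $G[X]$ isomorphic to $F$ and $0$ otherwise; $C^{1,\mathcal{F}}_t(v)=\mathsf{RELABEL}(C^{1,\mathcal{F}}_{t-1}(v),\{\!\{C^{1,\mathcal{F}}_{t-1}(u):u\in N(v)\}\!\})$ with a fixed injective $\mathsf{RELABEL}$ shared by all graphs. With $\Sigma_t$ the set of colours occurring at round $t$ over all of $\mathcal{G}_n$, $\phi_{\mathcal{F},t}(G)_c$ is the number of vertices of $G$ with colour $c$ at round $t$; $\phi^{(T)}_{\mathsf{WL},\mathcal{F}}(G)=[\phi_{\mathcal{F},0}(G),\dots,\phi_{\mathcal{F},T}(G)]\in\mathbb{R}^{d_T}$,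 and $\overline{\phi^{(T)}_{\mathsf{WL},\mathcal{F}}}$ is its normalisation to unit Euclidean norm. $\mathcal{E}_{\mathsf{WL},\mathcal{F}}(n,d_T)=\{\phi^{(T)}_{\mathsf{WL},\mathcal{F}}\}$, $\overline{\mathcal{E}}_{\mathsf{WL},\mathcal{F}}(n,d_T)=\{\overline{\phi^{(T)}_{\mathsf{WL},\mathcal{F}}}\}$. A sample $(\mathbf{x}_i,y_i)_{i\le s}\subset\mathbb{R}^d\times\{0,1\}$ is $(r,\lambda)$-separable if the $\mathbf{x}_i$ lie in a ball of radius $r$ and the distance between the convex hulls of the two classes is at least $2\lambda$. $\mathbb{H}_{r,\lambda}(\mathcal{E})$ is the set of partial concepts $h:\mathcal{G}_n\to\{0,1,\star\}$ such that every finite list of graphs in $\{G:h(G)\neq\star\}$, labelled by $h$ and embedded by some $\mathrm{emb}\in\mathcal{E}$, is $(r,\lambda)$-separable. VC dimension of a partial concept class: the largest size of a set $\{x_1,\dots,x_m\}$ such that every $\tau\in\{0,1\}^m$ is realised as $h(x_i)=\tau_i$ by some $h$ in the class. *)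

theory Defs
  imports Complex_Main "HOL-Library.Multiset"
begin

type_synonym lgraph = "(nat \<times> nat) set"
text \<open>A pattern graph with its own number of vertices k (vertices {0..<k}).\<close>
type_synonym fgraph = "nat \<times> (nat \<times> nat) set"

definition graph_on :: "nat \<Rightarrow> lgraph \<Rightarrow> bool" where
  "graph_on n E \<longleftrightarrow> E \<subseteq> {0..<n} \<times> {0..<n} \<and> (\<forall>u v. (u, v) \<in> E \<longrightarrow> (v, u) \<in> E)
      \<and> (\<forall>v. (v, v) \<notin> E)"

definition fin_graph :: "fgraph \<Rightarrow> bool" where
  "fin_graph H \<longleftrightarrow> graph_on (fst H) (snd H)"

definition graph_iso :: "nat \<Rightarrow> lgraph \<Rightarrow> lgraph \<Rightarrow> bool" where
  "graph_iso n E E' \<longleftrightarrow> (\<exists>f. bij_betw f {0..<n} {0..<n} \<and>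
      (\<forall>i\<in>{0..<n}. \<forall>j\<in>{0..<n}. (i, j) \<in> E \<longleftrightarrow> (f i, f j) \<in> E'))"

text \<open>G_n: unlabelled graphs on n vertices = isomorphism classes of labelled graphs.\<close>
definition Gn :: "nat \<Rightarrow> lgraph set set" where
  "Gn n = {{E'. graph_on n E' \<and> graph_iso n E E'} | E. graph_on n E}"

definition rep :: "lgraph set \<Rightarrow> lgraph" where
  "rep G = (SOME E. E \<in> G)"

definition in_induced_copy :: "nat \<Rightarrow> lgraph \<Rightarrow> fgraph \<Rightarrow> nat \<Rightarrow> bool" where
  "in_induced_copy n E H v \<longleftrightarrow> (\<exists>X f. X \<subseteq> {0..<n} \<and> v \<in> X \<and> bij_betw f {0..<fst H} X \<and>
      (\<forall>i<fst H. \<forall>j<fst H. (i, j) \<in> snd H \<longleftrightarrow> (f i, f j) \<in> E))"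

definition nbrs :: "lgraph \<Rightarrow> nat \<Rightarrow> nat set" where
  "nbrs E v = {u. (v, u) \<in> E}"

text \<open>Colours: the constructors form the (injective, graph-independent) RELABEL.
  The initial colour encodes the tuple (l_F(v))_F as the set of F with l_F(v) = 1.\<close>
datatype colour = Init "fgraph set" | Refine colour "colour multiset"

fun wl_col :: "fgraph set \<Rightarrow> nat \<Rightarrow> lgraph \<Rightarrow> nat \<Rightarrow> nat \<Rightarrow> colour" where
  "wl_col FF n E 0 v = Init {H \<in> FF. in_induced_copy n E H v}"
| "wl_col FF n E (Suc t) v =
     Refine (wl_col FF n E t v) (image_mset (wl_col FF n E t) (mset_set (nbrs E v)))"

fun depth :: "colour \<Rightarrow> nat" where
  "depth (Init _) = 0"
| "depth (Refine c _) = Suc (depth c)"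

definition Sigma_col :: "fgraph set \<Rightarrow> nat \<Rightarrow> nat \<Rightarrow> colour set" where
  "Sigma_col FF n t = {wl_col FF n E t v | E v. graph_on n E \<and> v < n}"

text \<open>Coordinate set of R^{d_T}: disjoint union of Sigma_0, ..., Sigma_T
  (colours of different rounds have different depth).\<close>
definition coords :: "fgraph set \<Rightarrow> nat \<Rightarrow> nat \<Rightarrow> colour set" where
  "coords FF n T = {c. depth c \<le> T \<and> c \<in> Sigma_col FF n (depth c)}"

definition wl_count :: "fgraph set \<Rightarrow> nat \<Rightarrow> lgraph \<Rightarrow> nat \<Rightarrow> colour \<Rightarrow> nat" where
  "wl_count FF n E t c = card {v. v < n \<and> wl_col FF n E t v = c}"

definition phi_wl :: "fgraph set \<Rightarrow> nat \<Rightarrow> nat \<Rightarrow> lgraph \<Rightarrow> colour \<Rightarrow> real" where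
  "phi_wl FF n T E = (\<lambda>c. if depth c \<le> T then real (wl_count FF n E (depth c) c) else 0)"

definition vnorm :: "'i set \<Rightarrow> ('i \<Rightarrow> real) \<Rightarrow> real" where
  "vnorm D x = sqrt (\<Sum>c\<in>D. (x c)\<^sup>2)"

definition normalise :: "'i set \<Rightarrow> ('i \<Rightarrow> real) \<Rightarrow> 'i \<Rightarrow> real" where
  "normalise D x = (\<lambda>c. x c / vnorm D x)"

definition emb_WL :: "fgraph set \<Rightarrow> nat \<Rightarrow> nat \<Rightarrow> lgraph set \<Rightarrow> colour \<Rightarrow> real" where
  "emb_WL FF n T G = phi_wl FF n T (rep G)"

definition emb_WL_norm :: "fgraph set \<Rightarrow> nat \<Rightarrow> nat \<Rightarrow> lgraph set \<Rightarrow> colour \<Rightarrow> real" where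
  "emb_WL_norm FF n T G = normalise (coords FF n T) (phi_wl FF n T (rep G))"

definition in_conv_hull :: "('i \<Rightarrow> real) set \<Rightarrow> ('i \<Rightarrow> real) \<Rightarrow> bool" where
  "in_conv_hull P x \<longleftrightarrow> (\<exists>u. (\<forall>p\<in>P. u p \<ge> 0) \<and> sum u P = 1 \<and> (\<forall>c. x c = (\<Sum>p\<in>P. u p * p c)))"

definition rl_separable :: "'i set \<Rightarrow> real \<Rightarrow> real \<Rightarrow> ('g \<Rightarrow> 'i \<Rightarrow> real) \<Rightarrow> ('g \<Rightarrow> bool)
    \<Rightarrow> 'g set \<Rightarrow> bool" where
  "rl_separable D r lam emb y S \<longleftrightarrow>
     (\<exists>x0. \<forall>G\<in>S. vnorm D (\<lambda>c. emb G c - x0 c) \<le> r) \<and>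
     (\<forall>p q. in_conv_hull (emb ` {G\<in>S. \<not> y G}) p \<and> in_conv_hull (emb ` {G\<in>S. y G}) q
        \<longrightarrow> vnorm D (\<lambda>c. p c - q c) \<ge> 2 * lam)"

text \<open>Partial concepts G_n -> {0,1,*}: Some False = 0, Some True = 1, None = *.\<close>
definition H_class :: "nat \<Rightarrow> 'i set \<Rightarrow> real \<Rightarrow> real \<Rightarrow> (lgraph set \<Rightarrow> 'i \<Rightarrow> real)
    \<Rightarrow> (lgraph set \<Rightarrow> bool option) set" where
  "H_class n D r lam emb = {h. (\<forall>G. G \<notin> Gn n \<longrightarrow> h G = None) \<and>
      (\<forall>S. finite S \<and> S \<subseteq> {G \<in> Gn n. h G \<noteq> None} \<longrightarrow>
         rl_separable D r lam emb (\<lambda>G. h G = Some True) S)}"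

definition shatters :: "('a \<Rightarrow> bool option) set \<Rightarrow> 'a set \<Rightarrow> bool" where
  "shatters H S \<longleftrightarrow> (\<forall>\<tau>. \<exists>h\<in>H. \<forall>x\<in>S. h x = Some (\<tau> x))"

definition vc_dim :: "'a set \<Rightarrow> ('a \<Rightarrow> bool option) set \<Rightarrow> nat" where
  "vc_dim X H = Sup {card S | S. S \<subseteq> X \<and> finite S \<and> shatters H S}"

end

theory Submission
  imports Defs
begin

lemma graph_on_fin: "{E. graph_on n E} \<subseteq> Pow ({0..<n} \<times> {0..<n})"
  by (auto simp: graph_on_def)

lemma finite_graphs: "finite {E. graph_on n E}"
  by (rule finite_subset[OF graph_on_fin]) auto

lemma finite_Gn: "finite (Gn n)"
proof -
  have "Gn n \<subseteq> Pow {E. graph_on n E}" by (auto simp: Gn_def)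
  then show ?thesis using finite_graphs by (meson finite_Pow_iff finite_subset)
qed

lemma finite_Sigma: "finite (Sigma_col FF n t)"
proof -
  have "Sigma_col FF n t = (\<lambda>(E,v). wl_col FF n E t v) ` ({E. graph_on n E} \<times> {0..<n})"
    unfolding Sigma_col_def by (auto simp: image_iff) blast
  then show ?thesis using finite_graphs by simp
qed

lemma finite_coords: "finite (coords FF n T)"
proof -
  have "coords FF n T \<subseteq> (\<Union>t\<in>{..T}. Sigma_col FF n t)" by (auto simp: coords_def)
  then show ?thesis using finite_Sigma by (meson finite_UN_I finite_atMost finite_subset)
qed

lemma depth_wl: "depth (wl_col FF n E t v) = t"
  by (induction t) auto

definition iso_map :: "nat \<Rightarrow> lgraph \<Rightarrow> lgraph \<Rightarrow> (nat \<Rightarrow> nat) \<Rightarrow> bool" where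
  "iso_map n E E' f \<longleftrightarrow> bij_betw f {0..<n} {0..<n} \<and> (\<forall>i<n. \<forall>j<n. (i,j)\<in>E \<longleftrightarrow> (f i, f j)\<in>E')"

lemma copy_iso:
  assumes "iso_map n E E' f" "in_induced_copy n E H v"
  shows "in_induced_copy n E' H (f v)"
proof -
  obtain X g where X: "X \<subseteq> {0..<n}" "v \<in> X" "bij_betw g {0..<fst H} X"
    "\<forall>i<fst H. \<forall>j<fst H. (i, j) \<in> snd H \<longleftrightarrow> (g i, g j) \<in> E"
    using assms(2) unfolding in_induced_copy_def by blast
  have bf: "bij_betw f {0..<n} {0..<n}" and ef: "\<forall>i<n. \<forall>j<n. (i,j)\<in>E \<longleftrightarrow> (f i, f j)\<in>E'"
    using assms(1) by (auto simp: iso_map_def)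
  have "bij_betw f X (f ` X)" using bf X(1) by (meson bij_betw_def bij_betw_subset inj_on_subset)
  then have b2: "bij_betw (f \<circ> g) {0..<fst H} (f ` X)" using X(3) by (metis bij_betw_trans)
  have "f ` X \<subseteq> {0..<n}" using bf X(1) by (auto simp: bij_betw_def)
  moreover have "\<forall>i<fst H. \<forall>j<fst H. (i, j) \<in> snd H \<longleftrightarrow> ((f \<circ> g) i, (f \<circ> g) j) \<in> E'"
  proof (intro allI impI)
    fix i j assume "i < fst H" "j < fst H"
    then have "g i \<in> X" "g j \<in> X" using X(3) by (auto simp: bij_betw_def)
    then have "g i < n" "g j < n" using X(1) by auto
    then show "(i, j) \<in> snd H \<longleftrightarrow> ((f \<circ> g) i, (f \<circ> g) j) \<in> E'"
      using X(4) ef \<open>i < fst H\<close> \<open>j < fst H\<close> by auto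
  qed
  ultimately show ?thesis unfolding in_induced_copy_def using b2 X(2) by blast
qed

lemma iso_inv:
  assumes "iso_map n E E' f"
  shows "iso_map n E' E (inv_into {0..<n} f)"
proof -
  have bf: "bij_betw f {0..<n} {0..<n}" and ef: "\<forall>i<n. \<forall>j<n. (i,j)\<in>E \<longleftrightarrow> (f i, f j)\<in>E'"
    using assms(1) by (auto simp: iso_map_def)
  have bi: "bij_betw (inv_into {0..<n} f) {0..<n} {0..<n}" using bf by (rule bij_betw_inv_into)
  show ?thesis unfolding iso_map_def
  proof (intro conjI bi allI impI)
    fix i j assume "i < n" "j < n"
    let ?g = "inv_into {0..<n} f"
    have "?g i < n" "?g j < n" using bi \<open>i<n\<close> \<open>j<n\<close> by (auto simp: bij_betw_def)
    moreover have "f (?g i) = i" "f (?g j) = j" using bf \<open>i<n\<close> \<open>j<n\<close>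
      by (auto simp: bij_betw_def f_inv_into_f)
    ultimately show "(i, j) \<in> E' \<longleftrightarrow> (?g i, ?g j) \<in> E" using ef by metis
  qed
qed

lemma wl_iso:
  assumes "graph_on n E" "graph_on n E'" "iso_map n E E' f" "v < n"
  shows "wl_col FF n E' t (f v) = wl_col FF n E t v"
  using assms(4)
proof (induction t arbitrary: v)
  case 0
  have bf: "bij_betw f {0..<n} {0..<n}" using assms(3) by (auto simp: iso_map_def)
  let ?g = "inv_into {0..<n} f"
  have gf: "?g (f v) = v" using bf 0 by (auto simp: bij_betw_def inv_into_f_f)
  have "in_induced_copy n E' H (f v) \<longleftrightarrow> in_induced_copy n E H v" for H
    using copy_iso[OF assms(3), of H v] copy_iso[OF iso_inv[OF assms(3)], of H "f v"] gf by auto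
  then show ?case by simp
next
  case (Suc t)
  have bf: "bij_betw f {0..<n} {0..<n}" and ef: "\<forall>i<n. \<forall>j<n. (i,j)\<in>E \<longleftrightarrow> (f i, f j)\<in>E'"
    using assms(3) by (auto simp: iso_map_def)
  have nE: "nbrs E v \<subseteq> {0..<n}" using assms(1) by (auto simp: nbrs_def graph_on_def)
  have nb: "nbrs E' (f v) = f ` nbrs E v"
  proof
    show "nbrs E' (f v) \<subseteq> f ` nbrs E v"
    proof
      fix u assume "u \<in> nbrs E' (f v)"
      then have "(f v, u) \<in> E'" by (simp add: nbrs_def)
      then have "u < n" using assms(2) by (auto simp: graph_on_def)
      then obtain w where "w < n" "u = f w" using bf unfolding bij_betw_def
        by (metis atLeastLessThan_iff imageE zero_le)
      then show "u \<in> f ` nbrs E v" using ef Suc.prems \<open>(f v, u) \<in> E'\<close> by (auto simp: nbrs_def)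
    qed
  next
    show "f ` nbrs E v \<subseteq> nbrs E' (f v)"
      using ef nE Suc.prems by (auto simp: nbrs_def)
  qed
  have inj: "inj_on f (nbrs E v)" using bf nE by (meson bij_betw_def inj_on_subset)
  have "image_mset (wl_col FF n E' t) (mset_set (nbrs E' (f v)))
      = image_mset (wl_col FF n E' t) (image_mset f (mset_set (nbrs E v)))"
    by (simp add: nb image_mset_mset_set[OF inj])
  also have "\<dots> = image_mset (wl_col FF n E t) (mset_set (nbrs E v))"
    unfolding multiset.map_comp
  proof (rule image_mset_cong)
    fix x assume "x \<in># mset_set (nbrs E v)"
    then have "x < n" using nE
      by (metis atLeastLessThan_iff elem_mset_set finite_atLeastLessThan finite_subset subsetD empty_iff mset_set.infinite set_mset_empty)
    then show "(wl_col FF n E' t \<circ> f) x = wl_col FF n E t x" using Suc.IH by simp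
  qed
  finally show ?case using Suc by simp
qed

lemma hull_avg:
  fixes emb :: "'g \<Rightarrow> 'i \<Rightarrow> real"
  assumes "finite A" "A \<noteq> {}"
  shows "in_conv_hull (emb ` A) (\<lambda>c. (\<Sum>G\<in>A. emb G c) / card A)"
proof -
  define u where "u x = real (card {G\<in>A. emb G = x}) / card A" for x
  have cA: "card A > 0" using assms by (simp add: card_gt_0_iff)
  have "(\<Sum>x\<in>emb ` A. u x) = (\<Sum>x\<in>emb ` A. (\<Sum>G\<in>{G\<in>A. emb G = x}. 1 / real (card A)))"
    by (simp add: u_def)
  also have "\<dots> = (\<Sum>G\<in>A. 1 / real (card A))"
    using sum.image_gen[OF assms(1), of "\<lambda>_. 1 / real (card A)" emb] by simp
  also have "\<dots> = 1" using cA by simp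
  finally have s1: "sum u (emb ` A) = 1" .
  have "(\<Sum>G\<in>A. emb G c) / card A = (\<Sum>x\<in>emb ` A. u x * x c)" for c
  proof -
    have "(\<Sum>x\<in>emb ` A. u x * x c) = (\<Sum>x\<in>emb ` A. (\<Sum>G\<in>{G\<in>A. emb G = x}. emb G c / card A))"
      by (rule sum.cong) (auto simp: u_def)
    also have "\<dots> = (\<Sum>G\<in>A. emb G c / card A)"
      using sum.image_gen[OF assms(1), of "\<lambda>G. emb G c / card A" emb] by simp
    finally show ?thesis by (simp add: sum_divide_distrib)
  qed
  then show ?thesis unfolding in_conv_hull_def using s1
    by (intro exI[of _ u]) (auto simp: u_def)
qed

lemma cs_sum:
  fixes u :: "'a \<Rightarrow> real"
  assumes "finite P" "sum u P = 1"
  shows "1 / card P \<le> (\<Sum>x\<in>P. (u x)\<^sup>2)"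
proof -
  have ne: "P \<noteq> {}" using assms by auto
  define N where "N = real (card P)"
  have N: "N > 0" using ne assms(1) by (simp add: N_def card_gt_0_iff)
  have "0 \<le> (\<Sum>x\<in>P. (u x - 1/N)\<^sup>2)" by (simp add: sum_nonneg)
  also have "\<dots> = (\<Sum>x\<in>P. (u x)\<^sup>2) - 2/N * sum u P + N * (1/N)\<^sup>2"
    by (simp add: power2_diff sum.distrib sum_subtractf sum_distrib_left sum_divide_distrib sum_distrib_right N_def algebra_simps)
  also have "\<dots> = (\<Sum>x\<in>P. (u x)\<^sup>2) - 1/N"
    using N assms(2) by (simp add: power2_eq_square field_simps)
  finally show ?thesis by (simp add: N_def)
qed

lemma hull_reindex:
  fixes emb :: "'g \<Rightarrow> 'i \<Rightarrow> real"
  assumes "in_conv_hull (emb ` A) p" "inj_on emb A" "finite A"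
  shows "\<exists>w. sum w A = 1 \<and> (\<forall>c. p c = (\<Sum>G\<in>A. w G * emb G c))"
proof -
  obtain u where u: "sum u (emb ` A) = 1" "\<forall>c. p c = (\<Sum>x\<in>emb ` A. u x * x c)"
    using assms(1) unfolding in_conv_hull_def by blast
  show ?thesis
    apply (rule exI[of _ "u \<circ> emb"])
    using u sum.reindex[OF assms(2), of u] sum.reindex[OF assms(2)] by auto
qed

lemma sep_lower:
  fixes emb :: "'g \<Rightarrow> 'i \<Rightarrow> real" and K K' :: "'g \<Rightarrow> 'i set" and T :: nat
  assumes fS: "finite S" and fD: "finite D" and a0: "\<alpha> \<noteq> 0" and T1: "T \<ge> 1"
    and emb_eq: "\<And>G c. G\<in>S \<Longrightarrow> emb G c = (if c \<in> K G then \<alpha> else 0)"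
    and K'D: "\<And>G. G\<in>S \<Longrightarrow> K' G \<subseteq> D" and K'K: "\<And>G. G\<in>S \<Longrightarrow> K' G \<subseteq> K G"
    and cK': "\<And>G. G\<in>S \<Longrightarrow> card (K' G) = T"
    and disj: "\<And>G G'. G\<in>S \<Longrightarrow> G'\<in>S \<Longrightarrow> G\<noteq>G' \<Longrightarrow> K' G \<inter> K G' = {}"
    and hp: "in_conv_hull (emb ` {G\<in>S. \<not> y G}) p" and hq: "in_conv_hull (emb ` {G\<in>S. y G}) q"
  shows "\<alpha>\<^sup>2 * T * 2 / card S \<le> (\<Sum>c\<in>D. (p c - q c)\<^sup>2)"
proof -
  define A where "A = {G\<in>S. \<not> y G}"
  define B where "B = {G\<in>S. y G}"
  have fA: "finite A" and fB: "finite B" using fS by (auto simp: A_def B_def)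
  have key: "emb G' c = (if G' = G then \<alpha> else 0)" if "G\<in>S" "c\<in>K' G" "G'\<in>S" for G G' c
  proof (cases "G' = G")
    case True then show ?thesis using that emb_eq K'K by auto
  next
    case False
    then have "c \<notin> K G'" using disj[OF that(1) that(3)] that(2) by auto
    then show ?thesis using emb_eq[OF that(3)] False by auto
  qed
  have fK': "finite (K' G)" "K' G \<noteq> {}" if "G\<in>S" for G
    using cK'[OF that] T1 by (auto intro: card_ge_0_finite)
  have inj: "inj_on emb S"
  proof (rule inj_onI)
    fix G G' assume G: "G\<in>S" "G'\<in>S" "emb G = emb G'"
    obtain c where "c \<in> K' G" using fK'[OF G(1)] by blast
    then show "G = G'" using key[OF G(1) \<open>c\<in>K' G\<close> G(1)] key[OF G(1) \<open>c\<in>K' G\<close> G(2)] G(3) a0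
      by (metis)
  qed
  obtain u where u: "sum u A = 1" "\<forall>c. p c = (\<Sum>G\<in>A. u G * emb G c)"
    using hull_reindex[OF hp[folded A_def] inj_on_subset[OF inj] fA] by (auto simp: A_def)
  obtain v where v: "sum v B = 1" "\<forall>c. q c = (\<Sum>G\<in>B. v G * emb G c)"
    using hull_reindex[OF hq[folded B_def] inj_on_subset[OF inj] fB] by (auto simp: B_def)
  define w where "w G = (if y G then v G else u G)" for G
  have pq: "(p c - q c)\<^sup>2 = \<alpha>\<^sup>2 * (w G)\<^sup>2" if "G\<in>S" "c\<in>K' G" for G c
  proof -
    have "p c = (\<Sum>G'\<in>A. u G' * (if G' = G then \<alpha> else 0))"
      using u(2) key[OF that] by (auto simp: A_def intro!: sum.cong)
    also have "\<dots> = (if G \<in> A then u G * \<alpha> else 0)"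
      using fA by (simp add: if_distrib sum.delta' cong: if_cong)
    finally have pc: "p c = (if G \<in> A then u G * \<alpha> else 0)" .
    have "q c = (\<Sum>G'\<in>B. v G' * (if G' = G then \<alpha> else 0))"
      using v(2) key[OF that] by (auto simp: B_def intro!: sum.cong)
    also have "\<dots> = (if G \<in> B then v G * \<alpha> else 0)"
      using fB by (simp add: if_distrib sum.delta' cong: if_cong)
    finally have qc: "q c = (if G \<in> B then v G * \<alpha> else 0)" .
    show ?thesis using pc qc that(1) by (auto simp: A_def B_def w_def power_mult_distrib)
  qed
  have "(\<Sum>c\<in>(\<Union>G\<in>S. K' G). (p c - q c)\<^sup>2) = (\<Sum>G\<in>S. \<Sum>c\<in>K' G. (p c - q c)\<^sup>2)"
  proof (rule sum.UNION_disjoint[OF fS])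
    show "\<forall>G\<in>S. finite (K' G)" using fK' by auto
    show "\<forall>G\<in>S. \<forall>G'\<in>S. G \<noteq> G' \<longrightarrow> K' G \<inter> K' G' = {}" using disj K'K by blast
  qed
  also have "\<dots> = (\<Sum>G\<in>S. T * (\<alpha>\<^sup>2 * (w G)\<^sup>2))"
    by (rule sum.cong) (auto simp: pq cK')
  also have "\<dots> = T * \<alpha>\<^sup>2 * ((\<Sum>G\<in>A. (u G)\<^sup>2) + (\<Sum>G\<in>B. (v G)\<^sup>2))"
  proof -
    have "S = A \<union> B" "A \<inter> B = {}" by (auto simp: A_def B_def)
    then have "(\<Sum>G\<in>S. (w G)\<^sup>2) = (\<Sum>G\<in>A. (w G)\<^sup>2) + (\<Sum>G\<in>B. (w G)\<^sup>2)"
      using fA fB by (simp add: sum.union_disjoint)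
    also have "\<dots> = (\<Sum>G\<in>A. (u G)\<^sup>2) + (\<Sum>G\<in>B. (v G)\<^sup>2)"
      by (auto simp: w_def A_def B_def intro!: arg_cong2[where f="(+)"] sum.cong)
    finally show ?thesis by (simp add: sum_distrib_left[symmetric] algebra_simps)
  qed
  finally have eq: "(\<Sum>c\<in>(\<Union>G\<in>S. K' G). (p c - q c)\<^sup>2) = T * \<alpha>\<^sup>2 * ((\<Sum>G\<in>A. (u G)\<^sup>2) + (\<Sum>G\<in>B. (v G)\<^sup>2))" .
  have cS: "card S > 0" using u(1) fS by (auto simp: A_def card_gt_0_iff)
  have cA: "card A > 0" using u(1) fA card_gt_0_iff by fastforce
  have cB: "card B > 0" using v(1) fB card_gt_0_iff by fastforce
  have "1 / card S \<le> 1 / card A"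
    using cA card_mono[OF fS, of A] by (auto simp: A_def intro!: divide_left_mono)
  also have "\<dots> \<le> (\<Sum>G\<in>A. (u G)\<^sup>2)" by (rule cs_sum[OF fA u(1)])
  finally have a1: "1 / card S \<le> (\<Sum>G\<in>A. (u G)\<^sup>2)" .
  have "1 / card S \<le> 1 / card B"
    using cB card_mono[OF fS, of B] by (auto simp: B_def intro!: divide_left_mono)
  also have "\<dots> \<le> (\<Sum>G\<in>B. (v G)\<^sup>2)" by (rule cs_sum[OF fB v(1)])
  finally have b1: "1 / card S \<le> (\<Sum>G\<in>B. (v G)\<^sup>2)" .
  have "\<alpha>\<^sup>2 * T * 2 / card S = T * \<alpha>\<^sup>2 * (1 / card S + 1 / card S)" by simp
  also have "\<dots> \<le> T * \<alpha>\<^sup>2 * ((\<Sum>G\<in>A. (u G)\<^sup>2) + (\<Sum>G\<in>B. (v G)\<^sup>2))"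
    using a1 b1 by (intro mult_left_mono) auto
  also have "\<dots> = (\<Sum>c\<in>(\<Union>G\<in>S. K' G). (p c - q c)\<^sup>2)" using eq by simp
  also have "\<dots> \<le> (\<Sum>c\<in>D. (p c - q c)\<^sup>2)"
    using K'D fD by (intro sum_mono2) auto
  finally show ?thesis .
qed

definition sg :: "bool \<Rightarrow> real" where "sg b = (if b then 1 else -1)"

lemma greedy:
  fixes z :: "nat \<Rightarrow> 'i \<Rightarrow> real"
  shows "\<exists>\<epsilon>::nat\<Rightarrow>bool. (\<Sum>c\<in>D. (\<Sum>i<j. sg (\<epsilon> i) * z i c)\<^sup>2) \<le> (\<Sum>i<j. \<Sum>c\<in>D. (z i c)\<^sup>2)"
proof (induction j)
  case 0
  then show ?case by simp
next
  case (Suc j)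
  then obtain \<epsilon> where e: "(\<Sum>c\<in>D. (\<Sum>i<j. sg (\<epsilon> i) * z i c)\<^sup>2) \<le> (\<Sum>i<j. \<Sum>c\<in>D. (z i c)\<^sup>2)" by blast
  define s where "s c = (\<Sum>i<j. sg (\<epsilon> i) * z i c)" for c
  define e where "e = ((\<Sum>c\<in>D. s c * z j c) \<le> 0)"
  define \<epsilon>' where "\<epsilon>' = \<epsilon>(j := e)"
  have sum_eq: "(\<Sum>i<Suc j. sg (\<epsilon>' i) * z i c) = s c + sg e * z j c" for c
  proof -
    have "(\<Sum>i<j. sg (\<epsilon>' i) * z i c) = s c" unfolding s_def \<epsilon>'_def by (rule sum.cong) auto
    then show ?thesis by (simp add: \<epsilon>'_def)
  qed
  have sq: "(sg e)\<^sup>2 = 1" by (simp add: sg_def)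
  have ip: "sg e * (\<Sum>c\<in>D. s c * z j c) \<le> 0"
    by (cases e) (auto simp: sg_def e_def)
  have "(\<Sum>c\<in>D. (\<Sum>i<Suc j. sg (\<epsilon>' i) * z i c)\<^sup>2)
      = (\<Sum>c\<in>D. (s c)\<^sup>2) + 2 * (sg e * (\<Sum>c\<in>D. s c * z j c)) + (\<Sum>c\<in>D. (z j c)\<^sup>2)"
  proof -
    have pt: "(s c + sg e * z j c)\<^sup>2 = (s c)\<^sup>2 + 2 * sg e * (s c * z j c) + (z j c)\<^sup>2" for c
      using sq by (simp add: power2_sum power_mult_distrib)
    have "(\<Sum>c\<in>D. (s c + sg e * z j c)\<^sup>2) = (\<Sum>c\<in>D. (s c)\<^sup>2) + (\<Sum>c\<in>D. 2 * sg e * (s c * z j c)) + (\<Sum>c\<in>D. (z j c)\<^sup>2)"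
      unfolding pt sum.distrib by simp
    then show ?thesis unfolding sum_eq by (simp add: sum_distrib_left[symmetric] mult.assoc)
  qed
  also have "\<dots> \<le> (\<Sum>c\<in>D. (s c)\<^sup>2) + (\<Sum>c\<in>D. (z j c)\<^sup>2)" using ip by simp
  also have "\<dots> \<le> (\<Sum>i<Suc j. \<Sum>c\<in>D. (z i c)\<^sup>2)" using e by (simp add: s_def)
  finally show ?case by blast
qed

lemma vnorm_sq: "(vnorm D x)\<^sup>2 = (\<Sum>c\<in>D. (x c)\<^sup>2)"
  unfolding vnorm_def by (simp add: sum_nonneg)

lemma sq_diff_le: "(x - y)\<^sup>2 \<le> 2*x\<^sup>2 + 2*(y::real)\<^sup>2"
proof -
  have "0 \<le> (x+y)\<^sup>2" by simp
  then show ?thesis by (simp add: power2_eq_square algebra_simps)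
qed

lemma H_dom:
  assumes "h \<in> H_class n D R lam emb" "\<forall>x\<in>S. h x = Some (\<tau> x)" "S0 \<subseteq> S" "finite S0"
  shows "rl_separable D R lam emb (\<lambda>G. h G = Some True) S0"
proof -
  have h1: "\<forall>G. G \<notin> Gn n \<longrightarrow> h G = None"
    and h2: "\<forall>S. finite S \<and> S \<subseteq> {G \<in> Gn n. h G \<noteq> None} \<longrightarrow>
         rl_separable D R lam emb (\<lambda>G. h G = Some True) S"
    using assms(1) unfolding H_class_def by auto
  have "S0 \<subseteq> {G \<in> Gn n. h G \<noteq> None}"
  proof
    fix G assume "G \<in> S0"
    then have "h G \<noteq> None" using assms(2,3) by auto
    then show "G \<in> {G \<in> Gn n. h G \<noteq> None}" using h1 by auto
  qed
  then show ?thesis using h2 assms(4) by blast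
qed

lemma vc_upper_card:
  fixes emb :: "lgraph set \<Rightarrow> 'i \<Rightarrow> real"
  assumes lam: "lam > 0" and sh: "shatters (H_class n D R lam emb) S" and fS: "finite S"
  shows "real (card S) \<le> 2 * R\<^sup>2 / lam\<^sup>2 + 1"
proof (cases "card S \<le> 1")
  case True
  have "0 \<le> 2 * R\<^sup>2 / lam\<^sup>2" by simp
  then show ?thesis using True by linarith
next
  case False
  define m where "m = card S"
  define j where "j = m div 2"
  have j1: "j \<ge> 1" and j2: "2 * j \<le> m" and j3: "m \<le> 2 * j + 1" using False by (auto simp: m_def j_def)
  obtain g where g: "bij_betw g {0..<m} S" using ex_bij_betw_nat_finite[OF fS] m_def by blast
  have ginj: "inj_on g {0..<m}" and gS: "g ` {0..<m} = S" using g by (auto simp: bij_betw_def)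
  have "\<exists>h\<in>H_class n D R lam emb. \<forall>x\<in>S. h x = Some ((\<lambda>_. False) x)"
    using sh[unfolded shatters_def, rule_format, of "\<lambda>_. False"] by simp
  then obtain h0 where h0: "h0 \<in> H_class n D R lam emb" "\<forall>x\<in>S. h0 x = Some False" by auto
  obtain x0 where x0: "\<forall>G\<in>S. vnorm D (\<lambda>c. emb G c - x0 c) \<le> R"
    using H_dom[OF h0(1) h0(2) order_refl fS] unfolding rl_separable_def by blast
  have Q0: "(\<Sum>c\<in>D. (emb G c - x0 c)\<^sup>2) \<le> R\<^sup>2" if "G \<in> S" for G
  proof -
    have "0 \<le> vnorm D (\<lambda>c. emb G c - x0 c)" by (simp add: vnorm_def sum_nonneg)
    then have "(vnorm D (\<lambda>c. emb G c - x0 c))\<^sup>2 \<le> R\<^sup>2" using x0 that by (intro power_mono) auto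
    then show ?thesis by (simp add: vnorm_sq)
  qed
  define z where "z i c = emb (g i) c - emb (g (j+i)) c" for i c
  have gin: "g i \<in> S" "g (j+i) \<in> S" if "i < j" for i using that j2 gS by auto
  have Qz: "(\<Sum>c\<in>D. (z i c)\<^sup>2) \<le> 4 * R\<^sup>2" if "i < j" for i
  proof -
    have "(\<Sum>c\<in>D. (z i c)\<^sup>2) \<le> (\<Sum>c\<in>D. 2 * (emb (g i) c - x0 c)\<^sup>2 + 2 * (emb (g (j+i)) c - x0 c)\<^sup>2)"
    proof (rule sum_mono)
      fix c
      have "(z i c)\<^sup>2 = ((emb (g i) c - x0 c) - (emb (g (j+i)) c - x0 c))\<^sup>2" by (simp add: z_def)
      also have "\<dots> \<le> 2 * (emb (g i) c - x0 c)\<^sup>2 + 2 * (emb (g (j+i)) c - x0 c)\<^sup>2"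
        by (rule sq_diff_le)
      finally show "(z i c)\<^sup>2 \<le> 2 * (emb (g i) c - x0 c)\<^sup>2 + 2 * (emb (g (j+i)) c - x0 c)\<^sup>2" .
    qed
    also have "\<dots> = 2 * (\<Sum>c\<in>D. (emb (g i) c - x0 c)\<^sup>2) + 2 * (\<Sum>c\<in>D. (emb (g (j+i)) c - x0 c)\<^sup>2)"
      by (simp add: sum.distrib sum_distrib_left)
    also have "\<dots> \<le> 4 * R\<^sup>2" using Q0[OF gin(1)[OF that]] Q0[OF gin(2)[OF that]] by simp
    finally show ?thesis .
  qed
  obtain \<epsilon> where eps: "(\<Sum>c\<in>D. (\<Sum>i<j. sg (\<epsilon> i) * z i c)\<^sup>2) \<le> (\<Sum>i<j. \<Sum>c\<in>D. (z i c)\<^sup>2)"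
    using greedy by blast
  also have "\<dots> \<le> (\<Sum>i<j. 4 * R\<^sup>2)" using Qz by (intro sum_mono) auto
  finally have epsQ: "(\<Sum>c\<in>D. (\<Sum>i<j. sg (\<epsilon> i) * z i c)\<^sup>2) \<le> j * (4 * R\<^sup>2)" by simp
  define a where "a i = (if \<epsilon> i then g i else g (j+i))" for i
  define b where "b i = (if \<epsilon> i then g (j+i) else g i)" for i
  define A where "A = a ` {..<j}"
  define B where "B = b ` {..<j}"
  have gii: "g x = g y \<longleftrightarrow> x = y" if "x < m" "y < m" for x y
    using ginj that by (auto simp: inj_on_def)
  have gii2: "g x = g y \<longleftrightarrow> x = y" if "x < 2*j" "y < 2*j" for x y
    using gii that j2 by auto
  have ainj: "inj_on a {..<j}" unfolding inj_on_def a_def using gii2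
    by (auto split: if_splits)
  have binj: "inj_on b {..<j}" unfolding inj_on_def b_def using gii2
    by (auto split: if_splits)
  have AB: "A \<inter> B = {}" unfolding A_def B_def a_def b_def using gii2
    by (auto split: if_splits)
  have ABS: "A \<union> B \<subseteq> S" unfolding A_def B_def a_def b_def using gin by auto
  have cA: "card A = j" "card B = j" unfolding A_def B_def using ainj binj by (auto simp: card_image)
  have fAB: "finite A" "finite B" "A \<noteq> {}" "B \<noteq> {}" using j1 by (auto simp: A_def B_def lessThan_empty_iff)
  have "\<exists>h\<in>H_class n D R lam emb. \<forall>x\<in>S. h x = Some ((\<lambda>x. x \<in> B) x)"
    using sh[unfolded shatters_def, rule_format, of "\<lambda>x. x \<in> B"] by simp
  then obtain h where h: "h \<in> H_class n D R lam emb" "\<forall>x\<in>S. h x = Some (x \<in> B)" by auto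
  have sep: "rl_separable D R lam emb (\<lambda>G. h G = Some True) (A \<union> B)"
    using H_dom[OF h ABS] fAB by auto
  have eA: "{G \<in> A \<union> B. \<not> h G = Some True} = A" using h(2) ABS AB by fastforce
  have eB: "{G \<in> A \<union> B. h G = Some True} = B" using h(2) ABS AB by auto
  define p where "p c = (\<Sum>G\<in>A. emb G c) / card A" for c
  define q where "q c = (\<Sum>G\<in>B. emb G c) / card B" for c
  have "in_conv_hull (emb ` A) p" unfolding p_def using hull_avg fAB by blast
  moreover have "in_conv_hull (emb ` B) q" unfolding q_def using hull_avg fAB by blast
  ultimately have d: "vnorm D (\<lambda>c. p c - q c) \<ge> 2 * lam"
    using sep unfolding rl_separable_def eA eB by blast
  have pq: "p c - q c = (\<Sum>i<j. sg (\<epsilon> i) * z i c) / j" for c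
  proof -
    have "(\<Sum>G\<in>A. emb G c) = (\<Sum>i<j. emb (a i) c)" unfolding A_def by (simp add: sum.reindex[OF ainj])
    moreover have "(\<Sum>G\<in>B. emb G c) = (\<Sum>i<j. emb (b i) c)" unfolding B_def by (simp add: sum.reindex[OF binj])
    moreover have "(\<Sum>i<j. emb (a i) c) - (\<Sum>i<j. emb (b i) c) = (\<Sum>i<j. sg (\<epsilon> i) * z i c)"
      unfolding sum_subtractf[symmetric] by (rule sum.cong) (auto simp: a_def b_def z_def sg_def)
    ultimately show ?thesis unfolding p_def q_def cA by (simp add: diff_divide_distrib[symmetric])
  qed
  have "(2 * lam)\<^sup>2 \<le> (vnorm D (\<lambda>c. p c - q c))\<^sup>2" using d lam by (intro power_mono) auto
  also have "\<dots> = (\<Sum>c\<in>D. ((\<Sum>i<j. sg (\<epsilon> i) * z i c) / j)\<^sup>2)" unfolding vnorm_sq pq ..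
  also have "\<dots> = (\<Sum>c\<in>D. (\<Sum>i<j. sg (\<epsilon> i) * z i c)\<^sup>2 / (real j)\<^sup>2)"
    by (simp only: power_divide)
  also have "\<dots> = (\<Sum>c\<in>D. (\<Sum>i<j. sg (\<epsilon> i) * z i c)\<^sup>2) / (real j)\<^sup>2"
    by (rule sum_divide_distrib[symmetric])
  also have "\<dots> \<le> j * (4 * R\<^sup>2) / (real j)\<^sup>2" using epsQ by (intro divide_right_mono) auto
  also have "\<dots> = 4 * R\<^sup>2 / j" using j1 by (simp add: power2_eq_square)
  finally have "4 * lam\<^sup>2 * j \<le> 4 * R\<^sup>2" using j1 by (simp add: power_mult_distrib field_simps)
  then have "real j \<le> R\<^sup>2 / lam\<^sup>2" using lam by (simp add: field_simps)
  then show ?thesis using j3 unfolding m_def[symmetric] by linarith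
qed

lemma vc_le:
  assumes "\<And>S. S \<subseteq> X \<Longrightarrow> finite S \<Longrightarrow> shatters H S \<Longrightarrow> real (card S) \<le> B" "B \<ge> 0"
  shows "real (vc_dim X H) \<le> B"
proof -
  define Y where "Y = {card S | S. S \<subseteq> X \<and> finite S \<and> shatters H S}"
  have "Sup Y \<le> nat \<lfloor>B\<rfloor>"
  proof (cases "Y = {}")
    case True then show ?thesis by simp
  next
    case False
    show ?thesis
    proof (rule cSup_least[OF False])
      fix y assume "y \<in> Y"
      then have "real y \<le> B" using assms(1) by (auto simp: Y_def)
      then show "y \<le> nat \<lfloor>B\<rfloor>" by linarith
    qed
  qed
  then have "real (Sup Y) \<le> real (nat \<lfloor>B\<rfloor>)" by simp
  also have "\<dots> \<le> B" using assms(2) by linarith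
  finally show ?thesis by (simp add: vc_dim_def Y_def)
qed

lemma vc_ge:
  assumes "finite X" "S \<subseteq> X" "shatters H S"
  shows "card S \<le> vc_dim X H"
proof -
  define Y where "Y = {card S | S. S \<subseteq> X \<and> finite S \<and> shatters H S}"
  have "bdd_above Y" unfolding Y_def bdd_above_def using assms(1) by (auto intro: card_mono)
  moreover have "card S \<in> Y" using assms finite_subset by (auto simp: Y_def)
  ultimately show ?thesis unfolding vc_dim_def Y_def[symmetric] by (rule cSup_upper[rotated])
qed

lemma shatter_constr:
  assumes "S \<subseteq> Gn n" "\<And>y S'. S' \<subseteq> S \<Longrightarrow> finite S' \<Longrightarrow> rl_separable D r lam emb y S'"
  shows "shatters (H_class n D r lam emb) S"
  unfolding shatters_def
proof
  fix \<tau> :: "lgraph set \<Rightarrow> bool"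
  define h where "h G = (if G \<in> S then Some (\<tau> G) else None)" for G
  have "h \<in> H_class n D r lam emb" unfolding H_class_def
  proof (intro CollectI conjI allI impI)
    fix G assume "G \<notin> Gn n" then show "h G = None" using assms(1) by (auto simp: h_def)
  next
    fix S' assume "finite S' \<and> S' \<subseteq> {G \<in> Gn n. h G \<noteq> None}"
    then have "S' \<subseteq> S" "finite S'" by (auto simp: h_def split: if_splits)
    then show "rl_separable D r lam emb (\<lambda>G. h G = Some True) S'" using assms(2) by blast
  qed
  moreover have "\<forall>x\<in>S. h x = Some (\<tau> x)" by (simp add: h_def)
  ultimately show "\<exists>h\<in>H_class n D r lam emb. \<forall>x\<in>S. h x = Some (\<tau> x)" by blast
qed

definition circ :: "nat \<Rightarrow> nat \<Rightarrow> lgraph" where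
  "circ n s = {(i,j). i<n \<and> j<n \<and> i\<noteq>j \<and>
     ((int j - int i) mod int n \<le> int s \<or> (int i - int j) mod int n \<le> int s)}"

lemma graph_on_circ: "graph_on n (circ n s)"
  unfolding graph_on_def circ_def by auto

definition rot :: "nat \<Rightarrow> nat \<Rightarrow> nat \<Rightarrow> nat" where "rot n k i = (i + k) mod n"

lemma rot_diff: "(int (rot n k j) - int (rot n k i)) mod int n = (int j - int i) mod int n"
proof -
  have "(int (rot n k j) - int (rot n k i)) mod int n = (int (j+k) mod int n - int (i+k) mod int n) mod int n"
    unfolding rot_def by (simp only: of_nat_mod)
  also have "\<dots> = (int (j+k) - int (i+k)) mod int n" by (rule mod_diff_eq)
  also have "int (j+k) - int (i+k) = int j - int i" by simp
  finally show ?thesis .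
qed

lemma rot_inj:
  assumes "i < n" "j < n" "rot n k i = rot n k j"
  shows "i = j"
proof -
  have "(int j - int i) mod int n = 0" using rot_diff[of n k j i] assms(3) by simp
  then have "int n dvd (int j - int i)" by (simp add: mod_eq_0_iff_dvd)
  then obtain d where d: "int j - int i = int n * d" by (auto simp: dvd_def)
  show ?thesis
  proof (cases "d = 0")
    case True then show ?thesis using d by simp
  next
    case False
    then have "d \<ge> 1 \<or> d \<le> -1" by linarith
    then show ?thesis
    proof
      assume "d \<ge> 1"
      then have "int n * d \<ge> int n * 1" by (intro mult_left_mono) auto
      then show ?thesis using d assms by linarith
    next
      assume "d \<le> -1"
      then have "int n * d \<le> int n * (-1)" by (intro mult_left_mono) auto
      then show ?thesis using d assms by linarith
    qed
  qed
qed

lemma rot_iso: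
  assumes "n > 0"
  shows "iso_map n (circ n s) (circ n s) (rot n k)"
proof -
  have "inj_on (rot n k) {0..<n}" using rot_inj by (auto simp: inj_on_def)
  moreover have "rot n k ` {0..<n} \<subseteq> {0..<n}" using assms by (auto simp: rot_def)
  ultimately have "bij_betw (rot n k) {0..<n} {0..<n}"
    by (simp add: bij_betw_def endo_inj_surj)
  moreover have "(i,j) \<in> circ n s \<longleftrightarrow> (rot n k i, rot n k j) \<in> circ n s" if "i < n" "j < n" for i j
  proof -
    have "rot n k i < n" "rot n k j < n" using assms by (auto simp: rot_def)
    moreover have "rot n k i = rot n k j \<longleftrightarrow> i = j" using rot_inj that by auto
    ultimately show ?thesis using that rot_diff[of n k j i] rot_diff[of n k i j] by (auto simp: circ_def)
  qed
  ultimately show ?thesis by (auto simp: iso_map_def)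
qed

lemma circ_uniform:
  assumes "v < n"
  shows "wl_col FF n (circ n s) t v = wl_col FF n (circ n s) t 0"
proof -
  have "rot n v 0 = v" using assms by (simp add: rot_def)
  then show ?thesis using wl_iso[OF graph_on_circ graph_on_circ rot_iso[of n s v], where v=0 and FF=FF and t=t] assms by simp
qed

definition col :: "fgraph set \<Rightarrow> nat \<Rightarrow> nat \<Rightarrow> nat \<Rightarrow> colour" where
  "col FF n s t = wl_col FF n (circ n s) t 0"

definition cls :: "nat \<Rightarrow> nat \<Rightarrow> lgraph set" where
  "cls n s = {E'. graph_on n E' \<and> graph_iso n (circ n s) E'}"

lemma graph_iso_map: "graph_iso n E E' \<Longrightarrow> \<exists>f. iso_map n E E' f"
  unfolding graph_iso_def iso_map_def by auto

lemma id_iso: "graph_iso n E E"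
  unfolding graph_iso_def by (intro exI[of _ id]) auto

lemma cls_in: "cls n s \<in> Gn n" "circ n s \<in> cls n s"
  unfolding cls_def Gn_def using graph_on_circ id_iso by auto

lemma rep_cls: "graph_on n (rep (cls n s))" "graph_iso n (circ n s) (rep (cls n s))"
proof -
  have "rep (cls n s) \<in> cls n s" unfolding rep_def using cls_in(2) by (rule someI)
  then show "graph_on n (rep (cls n s))" "graph_iso n (circ n s) (rep (cls n s))"
    by (auto simp: cls_def)
qed

lemma iso_uniform:
  assumes "graph_on n E'" "graph_iso n (circ n s) E'" "v < n"
  shows "wl_col FF n E' t v = col FF n s t"
proof -
  obtain f where f: "iso_map n (circ n s) E' f" using graph_iso_map[OF assms(2)] by blast
  then have "v \<in> f ` {0..<n}" using assms(3) by (auto simp: iso_map_def bij_betw_def)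
  then obtain w where w: "w < n" "v = f w" by auto
  show ?thesis using wl_iso[OF graph_on_circ assms(1) f w(1)] circ_uniform[OF w(1)] w(2)
    by (simp add: col_def)
qed

lemma depth_col: "depth (col FF n s t) = t"
  by (simp add: col_def depth_wl)

lemma phi_uniform:
  assumes "graph_on n E'" "graph_iso n (circ n s) E'"
  shows "phi_wl FF n T E' c = (if c \<in> col FF n s ` {..T} then real n else 0)"
proof -
  have wc: "wl_count FF n E' t c = (if col FF n s t = c then n else 0)" for t
  proof -
    have "{v. v < n \<and> wl_col FF n E' t v = c} = (if col FF n s t = c then {..<n} else {})"
      using iso_uniform[OF assms] by auto
    then show ?thesis unfolding wl_count_def by simp
  qed
  have "c \<in> col FF n s ` {..T} \<longleftrightarrow> depth c \<le> T \<and> col FF n s (depth c) = c"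
    using depth_col by (metis atMost_iff image_iff)
  then show ?thesis unfolding phi_wl_def wc by auto
qed

lemma col_in_coords: "n > 0 \<Longrightarrow> t \<le> T \<Longrightarrow> col FF n s t \<in> coords FF n T"
  unfolding coords_def Sigma_col_def col_def using graph_on_circ depth_wl
  by (metis (mono_tags, lifting) mem_Collect_eq)

lemma card_K: "card (col FF n s ` {..T}) = Suc T"
proof -
  have "inj_on (col FF n s) {..T}" by (metis depth_col inj_onI)
  then show ?thesis by (simp add: card_image)
qed

lemma emb_eq: "emb_WL FF n T (cls n s) c = (if c \<in> col FF n s ` {..T} then real n else 0)"
  unfolding emb_WL_def using phi_uniform[OF rep_cls] .

lemma vnorm_K:
  assumes "n > 0"
  shows "vnorm (coords FF n T) (\<lambda>c. if c \<in> col FF n s ` {..T} then a else 0) = \<bar>a\<bar> * sqrt (Suc T)"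
proof -
  have sub: "col FF n s ` {..T} \<subseteq> coords FF n T" using col_in_coords[OF assms] by auto
  have "(\<Sum>c\<in>coords FF n T. (if c \<in> col FF n s ` {..T} then a else 0)\<^sup>2)
      = (\<Sum>c\<in>coords FF n T. (if c \<in> col FF n s ` {..T} then a\<^sup>2 else 0))"
    by (rule sum.cong) auto
  also have "\<dots> = (\<Sum>c\<in>coords FF n T \<inter> col FF n s ` {..T}. a\<^sup>2)"
    by (rule sum.inter_restrict[OF finite_coords, symmetric])
  also have "\<dots> = Suc T * a\<^sup>2" using sub card_K by (simp add: Int_absorb1)
  finally show ?thesis unfolding vnorm_def by (simp add: real_sqrt_mult)
qed

lemma emb_norm_eq:
  assumes "n > 0"
  shows "emb_WL_norm FF n T (cls n s) c = (if c \<in> col FF n s ` {..T} then 1 / sqrt (Suc T) else 0)"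
proof -
  have "emb_WL_norm FF n T (cls n s) = normalise (coords FF n T) (\<lambda>c. if c \<in> col FF n s ` {..T} then real n else 0)"
    unfolding emb_WL_norm_def using phi_uniform[OF rep_cls] by presburger
  then show ?thesis unfolding normalise_def vnorm_K[OF assms] using assms by auto
qed

lemma size_col: "size (col FF n s (Suc t)) = 0 \<or> True" by simp

lemma deg_col:
  "col FF n s (Suc t) = Refine (col FF n s t) M \<Longrightarrow> size M = card (nbrs (circ n s) 0)"
  unfolding col_def by auto

lemma nbrs_strict:
  assumes "s < s'" "s' < m" "m \<le> n" "2 * m \<le> n + 2"
  shows "card (nbrs (circ n s) 0) < card (nbrs (circ n s') 0)"
proof (rule psubset_card_mono)
  show "finite (nbrs (circ n s') 0)"
    using graph_on_circ[of n s'] unfolding graph_on_def nbrs_def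
    by (rule_tac finite_subset[of _ "{0..<n}"]) auto
  have sub: "nbrs (circ n s) 0 \<subseteq> nbrs (circ n s') 0"
    unfolding nbrs_def circ_def using assms(1) by auto
  have n1: "s + 1 < n" using assms by linarith
  have "s + 1 \<in> nbrs (circ n s') 0" unfolding nbrs_def circ_def using n1 assms(1)
    by (auto simp: mod_pos_pos_trivial)
  moreover have "s + 1 \<notin> nbrs (circ n s) 0"
  proof -
    have a: "(int (s+1) - int 0) mod int n = int (s + 1)" using n1 by (simp add: mod_pos_pos_trivial)
    have "(int 0 - int (s+1)) mod int n = (int n + (int 0 - int (s+1))) mod int n"
      by (simp only: mod_add_self1)
    also have "\<dots> = (int n - int (s+1)) mod int n" by simp
    also have "\<dots> = int n - int (s+1)" using n1 by (intro mod_pos_pos_trivial) auto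
    finally have "(int 0 - int (s+1)) mod int n = int n - int (s+1)" .
    moreover have "int n - int (s+1) > int s" using assms by linarith
    ultimately show ?thesis using a unfolding nbrs_def circ_def by auto
  qed
  ultimately show "nbrs (circ n s) 0 \<subset> nbrs (circ n s') 0" using sub by blast
qed

lemma col_distinct:
  assumes "s < m" "s' < m" "s \<noteq> s'" "m \<le> n" "2 * m \<le> n + 2" "t \<ge> 1"
  shows "col FF n s t \<noteq> col FF n s' t'"
proof
  assume eq: "col FF n s t = col FF n s' t'"
  then have "t = t'" using depth_col by metis
  obtain t0 where t0: "t = Suc t0" using assms(6) by (cases t) auto
  have "card (nbrs (circ n s) 0) = card (nbrs (circ n s') 0)"
  proof -
    have "image_mset (wl_col FF n (circ n s) t0) (mset_set (nbrs (circ n s) 0)) =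
      image_mset (wl_col FF n (circ n s') t0) (mset_set (nbrs (circ n s') 0))"
      using eq unfolding \<open>t = t'\<close>[symmetric] t0 col_def by auto
    then have "size (image_mset (wl_col FF n (circ n s) t0) (mset_set (nbrs (circ n s) 0))) =
      size (image_mset (wl_col FF n (circ n s') t0) (mset_set (nbrs (circ n s') 0)))" by simp
    then show ?thesis by (simp only: size_image_mset size_mset_set)
  qed
  moreover have "card (nbrs (circ n s) 0) \<noteq> card (nbrs (circ n s') 0)"
    using nbrs_strict[of s s' m n] nbrs_strict[of s' s m n] assms by (cases "s < s'") auto
  ultimately show False by simp
qed

lemma lower_abstract:
  fixes emb :: "lgraph set \<Rightarrow> colour \<Rightarrow> real"
  assumes T1: "T \<ge> 1" and m1: "m \<ge> 1" and mn: "m \<le> n" and m2: "2*m \<le> n+2" and a0: "\<alpha> \<noteq> 0"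
    and hemb: "\<And>s c. s < m \<Longrightarrow> emb (cls n s) c = (if c \<in> col FF n s ` {..T} then \<alpha> else 0)"
    and ball: "\<bar>\<alpha>\<bar> * sqrt (Suc T) \<le> r"
    and sepc: "m \<ge> 2 \<Longrightarrow> 4 * lam\<^sup>2 \<le> \<alpha>\<^sup>2 * T * 2 / m"
  shows "m \<le> vc_dim (Gn n) (H_class n (coords FF n T) r lam emb)"
proof -
  have n0: "n > 0" using m1 mn by linarith
  have cinj: "inj_on (cls n) {..<m}"
  proof (rule inj_onI)
    fix s s' assume s: "s \<in> {..<m}" "s' \<in> {..<m}" "cls n s = cls n s'"
    have "circ n s' \<in> cls n s" using s(3) cls_in(2) by metis
    then have "graph_iso n (circ n s) (circ n s')" by (simp add: cls_def)
    then have "wl_col FF n (circ n s') 1 0 = col FF n s 1"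
      using iso_uniform[OF graph_on_circ _ n0] by blast
    then have "col FF n s' 1 = col FF n s 1" by (simp add: col_def)
    then show "s = s'" using col_distinct[of s m s' n 1 FF 1] s mn m2 by auto
  qed
  define S where "S = cls n ` {..<m}"
  have cS: "card S = m" unfolding S_def using cinj by (simp add: card_image)
  have SG: "S \<subseteq> Gn n" unfolding S_def using cls_in(1) by auto
  define sof where "sof G = inv_into {..<m} (cls n) G" for G
  have sof: "sof G < m" "cls n (sof G) = G" if "G \<in> S" for G
  proof -
    have "sof G \<in> {..<m}" using that unfolding S_def sof_def by (rule inv_into_into)
    then show "sof G < m" by simp
    show "cls n (sof G) = G" using that unfolding S_def sof_def by (rule f_inv_into_f)
  qed
  have sh: "shatters (H_class n (coords FF n T) r lam emb) S"
  proof (rule shatter_constr[OF SG])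
    fix y S' assume S': "S' \<subseteq> S" "finite S'"
    show "rl_separable (coords FF n T) r lam emb y S'"
      unfolding rl_separable_def
    proof (intro conjI allI impI)
      show "\<exists>x0. \<forall>G\<in>S'. vnorm (coords FF n T) (\<lambda>c. emb G c - x0 c) \<le> r"
      proof (intro exI[of _ "\<lambda>_. 0"] ballI)
        fix G assume "G \<in> S'"
        then have G: "G \<in> S" using S' by auto
        have "vnorm (coords FF n T) (\<lambda>c. emb G c - 0) = vnorm (coords FF n T) (\<lambda>c. if c \<in> col FF n (sof G) ` {..T} then \<alpha> else 0)"
          using hemb[OF sof(1)[OF G]] sof(2)[OF G] by simp
        also have "\<dots> = \<bar>\<alpha>\<bar> * sqrt (Suc T)" by (rule vnorm_K[OF n0])
        finally show "vnorm (coords FF n T) (\<lambda>c. emb G c - 0) \<le> r" using ball by simp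
      qed
    next
      fix p q
      assume pq: "in_conv_hull (emb ` {G \<in> S'. \<not> y G}) p \<and> in_conv_hull (emb ` {G \<in> S'. y G}) q"
      define K where "K G = col FF n (sof G) ` {..T}" for G
      define K' where "K' G = col FF n (sof G) ` {1..T}" for G
      have cK': "card (K' G) = T" for G
      proof -
        have "inj_on (col FF n (sof G)) {1..T}" by (metis depth_col inj_onI)
        then show ?thesis unfolding K'_def by (simp add: card_image)
      qed
      have low: "\<alpha>\<^sup>2 * T * 2 / card S' \<le> (\<Sum>c\<in>coords FF n T. (p c - q c)\<^sup>2)"
      proof (rule sep_lower[OF S'(2) finite_coords a0 T1, where emb=emb and K=K and K'=K' and y=y and p=p and q=q])
        fix G c assume "G \<in> S'"
        then have G: "G \<in> S" using S' by auto
        show "emb G c = (if c \<in> K G then \<alpha> else 0)"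
          using hemb[OF sof(1)[OF G], of c] sof(2)[OF G] by (simp add: K_def)
      next
        fix G assume "G \<in> S'"
        show "K' G \<subseteq> coords FF n T" unfolding K'_def using col_in_coords[OF n0] by auto
        show "K' G \<subseteq> K G" unfolding K'_def K_def by auto
        show "card (K' G) = T" by (rule cK')
      next
        fix G G' assume GG: "G \<in> S'" "G' \<in> S'" "G \<noteq> G'"
        then have G: "G \<in> S" "G' \<in> S" using S' by auto
        have "sof G \<noteq> sof G'" using sof(2)[OF G(1)] sof(2)[OF G(2)] GG(3) by metis
        then show "K' G \<inter> K G' = {}" unfolding K'_def K_def
          using col_distinct[OF sof(1)[OF G(1)] sof(1)[OF G(2)] _ mn m2] by fastforce
      next
        show "in_conv_hull (emb ` {G \<in> S'. \<not> y G}) p" "in_conv_hull (emb ` {G \<in> S'. y G}) q"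
          using pq by auto
      qed
      have ne0: "P \<noteq> {}" if "in_conv_hull (emb ` P) x" for P x
      proof
        assume "P = {}"
        then show False using that unfolding in_conv_hull_def by simp
      qed
      have ne: "{G \<in> S'. \<not> y G} \<noteq> {}" "{G \<in> S'. y G} \<noteq> {}"
        using pq ne0 by blast+
      have "card S' \<ge> 2"
      proof -
        obtain a b where "a \<in> S'" "b \<in> S'" "\<not> y a" "y b" using ne by blast
        then have ab: "{a, b} \<subseteq> S'" "a \<noteq> b" by auto
        then have "card {a, b} = 2" by simp
        then show ?thesis using card_mono[OF S'(2) ab(1)] by simp
      qed
      moreover have "card S' \<le> m"
      proof -
        have "finite S" unfolding S_def by simp
        then show ?thesis using card_mono[OF _ S'(1)] cS by simp
      qed
      ultimately have m2': "m \<ge> 2" and cS': "card S' \<le> m" "card S' \<ge> 2" by auto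
      have "4 * lam\<^sup>2 \<le> \<alpha>\<^sup>2 * T * 2 / m" by (rule sepc[OF m2'])
      also have "\<dots> \<le> \<alpha>\<^sup>2 * T * 2 / card S'"
        using cS' by (intro divide_left_mono) auto
      also have "\<dots> \<le> (\<Sum>c\<in>coords FF n T. (p c - q c)\<^sup>2)" by (rule low)
      finally have "(2 * lam)\<^sup>2 \<le> (\<Sum>c\<in>coords FF n T. (p c - q c)\<^sup>2)" by (simp add: power_mult_distrib)
      then show "2 * lam \<le> vnorm (coords FF n T) (\<lambda>c. p c - q c)"
        unfolding vnorm_def by (rule real_le_rsqrt)
    qed
  qed
  show ?thesis using vc_ge[OF finite_Gn SG sh] cS by simp
qed

lemma mfl1: "(x::real) \<ge> 0 \<Longrightarrow> x/16 \<le> real (max 1 (nat \<lfloor>x/8\<rfloor>))"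
proof (cases "x/8 \<ge> 1")
  case True
  have f1: "\<lfloor>x/8\<rfloor> \<ge> 1" using True by (simp add: le_floor_iff)
  then have f: "real (nat \<lfloor>x/8\<rfloor>) = of_int \<lfloor>x/8\<rfloor>" by simp
  have "of_int \<lfloor>x/8\<rfloor> > x/8 - 1" using real_of_int_floor_add_one_gt[of "x/8"] by linarith
  then have "real (nat \<lfloor>x/8\<rfloor>) \<ge> x/8 - 1" using f by linarith
  moreover have "real (nat \<lfloor>x/8\<rfloor>) \<ge> 1" using f f1 by simp
  ultimately have "real (nat \<lfloor>x/8\<rfloor>) \<ge> x/16" by linarith
  then show ?thesis by linarith
next
  case False then show ?thesis by simp
qed

lemma mfl2: "2 \<le> max 1 (nat \<lfloor>(x::real)/8\<rfloor>) \<Longrightarrow> real (max 1 (nat \<lfloor>x/8\<rfloor>)) \<le> x/8"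
  by (cases "nat \<lfloor>x/8\<rfloor> \<le> 1") (auto simp: max_def, linarith)

lemma mfl3:
  assumes "(x::real) \<le> 2 * real n" "n \<ge> 1"
  shows "max 1 (nat \<lfloor>x/8\<rfloor>) \<le> n" "2 * max 1 (nat \<lfloor>x/8\<rfloor>) \<le> n + 2"
proof -
  have "real (nat \<lfloor>x/8\<rfloor>) \<le> real n / 4" using assms by linarith
  then have "4 * nat \<lfloor>x/8\<rfloor> \<le> n" by linarith
  then show "max 1 (nat \<lfloor>x/8\<rfloor>) \<le> n" "2 * max 1 (nat \<lfloor>x/8\<rfloor>) \<le> n + 2" using assms(2) by auto
qed

lemma arith1:
  fixes lam nn m :: real and T :: nat
  assumes "lam > 0" "T \<ge> 1" "m > 0" "m \<le> ((real T + 1) * nn) / lam\<^sup>2 / 8" "nn \<ge> 0"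
  shows "4 * lam\<^sup>2 \<le> nn * T * 2 / m"
proof -
  have l2: "lam\<^sup>2 > 0" using assms by simp
  have "8 * lam\<^sup>2 * m \<le> (real T + 1) * nn" using assms(4) l2 by (simp add: field_simps)
  also have "\<dots> \<le> 2 * real T * nn" using assms(2,5) by (intro mult_right_mono) auto
  finally have "8 * lam\<^sup>2 * m \<le> 2 * real T * nn" .
  moreover have "0 \<le> real T * nn" using assms(5) by simp
  ultimately have "4 * lam\<^sup>2 * m \<le> nn * T * 2" by (simp add: algebra_simps)
  then show ?thesis using assms(3) by (simp add: field_simps)
qed

lemma arith2:
  fixes lam m :: real and T :: nat
  assumes "lam > 0" "T \<ge> 1" "m > 0" "m \<le> 1 / lam\<^sup>2 / 8"
  shows "4 * lam\<^sup>2 \<le> (1 / sqrt (real (Suc T)))\<^sup>2 * T * 2 / m"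
proof -
  have l2: "lam\<^sup>2 > 0" using assms by simp
  have "8 * lam\<^sup>2 * m \<le> 1" using assms(4) l2 by (simp add: field_simps)
  then have "8 * lam\<^sup>2 * m * (real T + 1) \<le> 1 * (real T + 1)" by (intro mult_right_mono) auto
  then have "4 * lam\<^sup>2 * m * (real T + 1) \<le> (real T + 1) / 2" by simp
  also have "\<dots> \<le> real T * 2" using assms(2) by simp
  finally have a: "4 * lam\<^sup>2 * m * (real T + 1) \<le> real T * 2" .
  have "(1 / sqrt (real (Suc T)))\<^sup>2 = 1 / (real T + 1)" by (simp add: power_divide)
  moreover have "4 * lam\<^sup>2 \<le> real T * 2 / (m * (real T + 1))"
  proof -
    have p: "m * (real T + 1) > 0" using assms(3) by simp
    show ?thesis using a p by (simp add: le_divide_eq algebra_simps)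
  qed
  ultimately show ?thesis by (simp add: algebra_simps)
qed

lemma upper_gen:
  fixes emb :: "lgraph set \<Rightarrow> 'i \<Rightarrow> real"
  assumes "lam > 0"
  shows "real (vc_dim (Gn n) (H_class n D R lam emb)) \<le> 3 * max 1 (R\<^sup>2 / lam\<^sup>2)"
proof (rule vc_le)
  fix S assume "S \<subseteq> Gn n" "finite S" "shatters (H_class n D R lam emb) S"
  then have "real (card S) \<le> 2 * R\<^sup>2 / lam\<^sup>2 + 1" using vc_upper_card assms by blast
  then show "real (card S) \<le> 3 * max 1 (R\<^sup>2 / lam\<^sup>2)" by linarith
qed simp

lemma part1:
  fixes FF :: "fgraph set" and T :: nat and lam :: real and n :: nat
  assumes "T > 0" "lam > 0" "real n \<ge> (sqrt (real T + 1) * real n)\<^sup>2 / lam\<^sup>2"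
  shows "1/16 * ((sqrt (real T + 1) * real n)\<^sup>2 / lam\<^sup>2)
         \<le> real (vc_dim (Gn n) (H_class n (coords FF n T) (sqrt (real T + 1) * real n) lam
                                   (emb_WL FF n T)))"
proof (cases "n = 0")
  case True then show ?thesis by simp
next
  case False
  define x where "x = (sqrt (real T + 1) * real n)\<^sup>2 / lam\<^sup>2"
  have x0: "x \<ge> 0" by (simp add: x_def)
  have xe: "x = ((real T + 1) * (real n)\<^sup>2) / lam\<^sup>2"
    unfolding x_def by (simp add: power_mult_distrib)
  define m where "m = max 1 (nat \<lfloor>x/8\<rfloor>)"
  have n1: "n \<ge> 1" using False by simp
  have xn: "x \<le> 2 * real n" using assms(3) x0 unfolding x_def by linarith
  have "m \<le> vc_dim (Gn n) (H_class n (coords FF n T) (sqrt (real T + 1) * real n) lam (emb_WL FF n T))"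
  proof (rule lower_abstract[where \<alpha> = "real n"])
    show "1 \<le> T" using assms by simp
    show "1 \<le> m" by (simp add: m_def)
    show "m \<le> n" "2 * m \<le> n + 2" using mfl3[OF xn n1] by (simp_all add: m_def)
    show "real n \<noteq> 0" using False by simp
    show "emb_WL FF n T (cls n s) c = (if c \<in> col FF n s ` {..T} then real n else 0)" for s c
      by (rule emb_eq)
    show "\<bar>real n\<bar> * sqrt (real (Suc T)) \<le> sqrt (real T + 1) * real n"
      by (simp add: add.commute)
    assume "2 \<le> m"
    then have "real m \<le> x / 8" using mfl2 unfolding m_def by blast
    then have "real m \<le> ((real T + 1) * (real n)\<^sup>2) / lam\<^sup>2 / 8" using xe by simp
    then show "4 * lam\<^sup>2 \<le> (real n)\<^sup>2 * real T * 2 / real m"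
      using arith1[of lam T "real m" "(real n)\<^sup>2"] assms \<open>2 \<le> m\<close> by simp
  qed
  moreover have "x/16 \<le> real m" unfolding m_def by (rule mfl1[OF x0])
  ultimately show ?thesis unfolding x_def by simp
qed

lemma part2:
  fixes FF :: "fgraph set" and T :: nat and lam :: real and n :: nat
  assumes "T > 0" "lam > 0" "real n \<ge> (sqrt (real T / (real T + 1)))\<^sup>2 / lam\<^sup>2"
  shows "1/16 * (1 / lam\<^sup>2)
         \<le> real (vc_dim (Gn n) (H_class n (coords FF n T) 1 lam (emb_WL_norm FF n T)))"
proof -
  define x where "x = 1 / lam\<^sup>2"
  have x0: "x > 0" using assms by (simp add: x_def)
  have "(sqrt (real T / (real T + 1)))\<^sup>2 = real T / (real T + 1)" by simp
  moreover have "real T / (real T + 1) \<ge> 1/2" using assms(1) by (simp add: field_simps)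
  ultimately have "real n \<ge> (1/2) / lam\<^sup>2" using assms(2,3)
    by (smt (verit) divide_right_mono zero_le_power2)
  then have xn: "x \<le> 2 * real n" unfolding x_def by (simp add: field_simps)
  have n1: "n \<ge> 1"
  proof (rule ccontr)
    assume "\<not> n \<ge> 1" then have "n = 0" by simp
    then show False using \<open>real n \<ge> (1/2) / lam\<^sup>2\<close> assms(2) by simp
  qed
  define m where "m = max 1 (nat \<lfloor>x/8\<rfloor>)"
  have "m \<le> vc_dim (Gn n) (H_class n (coords FF n T) 1 lam (emb_WL_norm FF n T))"
  proof (rule lower_abstract[where \<alpha> = "1 / sqrt (real (Suc T))"])
    show "1 \<le> T" using assms by simp
    show "1 \<le> m" by (simp add: m_def)
    show "m \<le> n" "2 * m \<le> n + 2" using mfl3[OF xn n1] by (simp_all add: m_def)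
    show "1 / sqrt (real (Suc T)) \<noteq> 0" by simp
    show "emb_WL_norm FF n T (cls n s) c = (if c \<in> col FF n s ` {..T} then 1 / sqrt (real (Suc T)) else 0)" for s c
      using emb_norm_eq n1 by simp
    show "\<bar>1 / sqrt (real (Suc T))\<bar> * sqrt (real (Suc T)) \<le> 1" by simp
    assume "2 \<le> m"
    then have "real m \<le> x / 8" using mfl2 unfolding m_def by blast
    then show "4 * lam\<^sup>2 \<le> (1 / sqrt (real (Suc T)))\<^sup>2 * real T * 2 / real m"
      using arith2[of lam T "real m"] assms \<open>2 \<le> m\<close> unfolding x_def by simp
  qed
  moreover have "x/16 \<le> real m" unfolding m_def using x0 by (intro mfl1) simp
  ultimately show ?thesis unfolding x_def by simp
qed

theorem corollary5:
  fixes FF :: "fgraph set"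
  assumes "finite FF" and "\<forall>H\<in>FF. fin_graph H"
  shows "\<exists>c1 c2 :: real. c1 > 0 \<and> c2 > 0 \<and>
    (\<forall>(T::nat) (lam::real) (n::nat).
       T > 0 \<and> lam > 0 \<and> real n \<ge> (sqrt (real T + 1) * real n)\<^sup>2 / lam\<^sup>2 \<longrightarrow>
       c1 * ((sqrt (real T + 1) * real n)\<^sup>2 / lam\<^sup>2)
         \<le> real (vc_dim (Gn n) (H_class n (coords FF n T) (sqrt (real T + 1) * real n) lam
                                   (emb_WL FF n T))) \<and>
       real (vc_dim (Gn n) (H_class n (coords FF n T) (sqrt (real T + 1) * real n) lam
                                   (emb_WL FF n T)))
         \<le> c2 * max 1 ((sqrt (real T + 1) * real n)\<^sup>2 / lam\<^sup>2)) \<and>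
    (\<forall>(T::nat) (lam::real) (n::nat).
       T > 0 \<and> lam > 0 \<and> real n \<ge> (sqrt (real T / (real T + 1)))\<^sup>2 / lam\<^sup>2 \<longrightarrow>
       c1 * (1 / lam\<^sup>2)
         \<le> real (vc_dim (Gn n) (H_class n (coords FF n T) 1 lam (emb_WL_norm FF n T))) \<and>
       real (vc_dim (Gn n) (H_class n (coords FF n T) 1 lam (emb_WL_norm FF n T)))
         \<le> c2 * max 1 (1 / lam\<^sup>2))"
proof -
  have A: "\<forall>(T::nat) (lam::real) (n::nat).
       T > 0 \<and> lam > 0 \<and> real n \<ge> (sqrt (real T + 1) * real n)\<^sup>2 / lam\<^sup>2 \<longrightarrow>
       1/16 * ((sqrt (real T + 1) * real n)\<^sup>2 / lam\<^sup>2)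
         \<le> real (vc_dim (Gn n) (H_class n (coords FF n T) (sqrt (real T + 1) * real n) lam
                                   (emb_WL FF n T))) \<and>
       real (vc_dim (Gn n) (H_class n (coords FF n T) (sqrt (real T + 1) * real n) lam
                                   (emb_WL FF n T)))
         \<le> 3 * max 1 ((sqrt (real T + 1) * real n)\<^sup>2 / lam\<^sup>2)"
    using part1 upper_gen by blast
  have B: "\<forall>(T::nat) (lam::real) (n::nat).
       T > 0 \<and> lam > 0 \<and> real n \<ge> (sqrt (real T / (real T + 1)))\<^sup>2 / lam\<^sup>2 \<longrightarrow>
       1/16 * (1 / lam\<^sup>2)
         \<le> real (vc_dim (Gn n) (H_class n (coords FF n T) 1 lam (emb_WL_norm FF n T))) \<and>
       real (vc_dim (Gn n) (H_class n (coords FF n T) 1 lam (emb_WL_norm FF n T)))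
         \<le> 3 * max 1 (1 / lam\<^sup>2)"
  proof (intro allI impI conjI)
    fix T :: nat and lam :: real and n :: nat
    assume a: "0 < T \<and> 0 < lam \<and> (sqrt (real T / (real T + 1)))\<^sup>2 / lam\<^sup>2 \<le> real n"
    then show "1/16 * (1 / lam\<^sup>2)
         \<le> real (vc_dim (Gn n) (H_class n (coords FF n T) 1 lam (emb_WL_norm FF n T)))"
      using part2 by blast
    have "real (vc_dim (Gn n) (H_class n (coords FF n T) 1 lam (emb_WL_norm FF n T))) \<le> 3 * max 1 (1\<^sup>2 / lam\<^sup>2)"
      using a upper_gen by blast
    then show "real (vc_dim (Gn n) (H_class n (coords FF n T) 1 lam (emb_WL_norm FF n T)))
         \<le> 3 * max 1 (1 / lam\<^sup>2)" by simp
  qed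
  show ?thesis
    apply (rule exI[of _ "1/16::real"])
    apply (rule exI[of _ "3::real"])
    apply (intro conjI)
       apply simp
      apply simp
     apply (rule A)
    apply (rule B)
    done
qed

end
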